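(* Let $G$ be a connected graph that is not isomorphic to a path. Let $u$ be a pendant vertex of $G$ adjacent to a cut-vertex $v$ with $\deg(v)=2$. Then $u$ is not a basis forced vertex of $G$.
   Context: All graphs are finite and simple. A pendant is a vertex with exactly one neighbour; a cut-vertex is a vertex $v$ such that $G-v$ is disconnected. For vertices $x,y$ of a connected graph $G$, $d(x,y)$ is the length of a shortest $x$–$y$ path. A set $R\subseteq V(G)$ is a resolving set if for all distinct $x,y\in V(G)$ there is $r\in R$ with $d(r,x)\neq d(r,y)$. The metric dimension $\dim(G)$ is the minimum cardinality of a resolving set, and a resolving set of cardinality $\dim(G)$ is a metric basis. A vertex is a basis forced vertex if it belongs to every metric basis of $G$. *)

theory Defs
  imports Main
begin

definition simple_graph :: "'a set \<Rightarrow> ('a \<Rightarrow> 'a \<Rightarrow> bool) \<Rightarrow> bool" where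
  "simple_graph V E \<longleftrightarrow> finite V \<and>
     (\<forall>x y. E x y \<longrightarrow> x \<in> V \<and> y \<in> V) \<and>
     (\<forall>x. \<not> E x x) \<and> (\<forall>x y. E x y \<longrightarrow> E y x)"

definition neighbours :: "'a set \<Rightarrow> ('a \<Rightarrow> 'a \<Rightarrow> bool) \<Rightarrow> 'a \<Rightarrow> 'a set" where
  "neighbours V E v = {w \<in> V. E v w}"

definition degree :: "'a set \<Rightarrow> ('a \<Rightarrow> 'a \<Rightarrow> bool) \<Rightarrow> 'a \<Rightarrow> nat" where
  "degree V E v = card (neighbours V E v)"

definition pendant :: "'a set \<Rightarrow> ('a \<Rightarrow> 'a \<Rightarrow> bool) \<Rightarrow> 'a \<Rightarrow> bool" where
  "pendant V E v \<longleftrightarrow> v \<in> V \<and> degree V E v = 1"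

definition is_walk :: "'a set \<Rightarrow> ('a \<Rightarrow> 'a \<Rightarrow> bool) \<Rightarrow> 'a list \<Rightarrow> bool" where
  "is_walk V E p \<longleftrightarrow> p \<noteq> [] \<and> set p \<subseteq> V \<and>
     (\<forall>i. Suc i < length p \<longrightarrow> E (p ! i) (p ! Suc i))"

definition walk_betw :: "'a set \<Rightarrow> ('a \<Rightarrow> 'a \<Rightarrow> bool) \<Rightarrow> 'a \<Rightarrow> 'a list \<Rightarrow> 'a \<Rightarrow> bool" where
  "walk_betw V E x p y \<longleftrightarrow> is_walk V E p \<and> hd p = x \<and> last p = y"

definition connected_graph :: "'a set \<Rightarrow> ('a \<Rightarrow> 'a \<Rightarrow> bool) \<Rightarrow> bool" where
  "connected_graph V E \<longleftrightarrow> V \<noteq> {} \<and> (\<forall>x\<in>V. \<forall>y\<in>V. \<exists>p. walk_betw V E x p y)"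

definition dist :: "'a set \<Rightarrow> ('a \<Rightarrow> 'a \<Rightarrow> bool) \<Rightarrow> 'a \<Rightarrow> 'a \<Rightarrow> nat" where
  "dist V E x y = (LEAST n. \<exists>p. walk_betw V E x p y \<and> length p = Suc n)"

definition delete_vertex :: "('a \<Rightarrow> 'a \<Rightarrow> bool) \<Rightarrow> 'a \<Rightarrow> 'a \<Rightarrow> 'a \<Rightarrow> bool" where
  "delete_vertex E v = (\<lambda>x y. E x y \<and> x \<noteq> v \<and> y \<noteq> v)"

definition cut_vertex :: "'a set \<Rightarrow> ('a \<Rightarrow> 'a \<Rightarrow> bool) \<Rightarrow> 'a \<Rightarrow> bool" where
  "cut_vertex V E v \<longleftrightarrow> v \<in> V \<and> \<not> connected_graph (V - {v}) (delete_vertex E v)"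

definition is_path_graph :: "'a set \<Rightarrow> ('a \<Rightarrow> 'a \<Rightarrow> bool) \<Rightarrow> bool" where
  "is_path_graph V E \<longleftrightarrow> (\<exists>n f. n \<ge> 1 \<and> bij_betw f {0..<n} V \<and>
     (\<forall>i<n. \<forall>j<n. E (f i) (f j) \<longleftrightarrow> (i = Suc j \<or> j = Suc i)))"

definition resolving_set :: "'a set \<Rightarrow> ('a \<Rightarrow> 'a \<Rightarrow> bool) \<Rightarrow> 'a set \<Rightarrow> bool" where
  "resolving_set V E R \<longleftrightarrow> R \<subseteq> V \<and>
     (\<forall>x\<in>V. \<forall>y\<in>V. x \<noteq> y \<longrightarrow> (\<exists>r\<in>R. dist V E r x \<noteq> dist V E r y))"

definition metric_dim :: "'a set \<Rightarrow> ('a \<Rightarrow> 'a \<Rightarrow> bool) \<Rightarrow> nat" where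
  "metric_dim V E = (LEAST k. \<exists>R. resolving_set V E R \<and> card R = k)"

definition metric_basis :: "'a set \<Rightarrow> ('a \<Rightarrow> 'a \<Rightarrow> bool) \<Rightarrow> 'a set \<Rightarrow> bool" where
  "metric_basis V E R \<longleftrightarrow> resolving_set V E R \<and> card R = metric_dim V E"

definition basis_forced :: "'a set \<Rightarrow> ('a \<Rightarrow> 'a \<Rightarrow> bool) \<Rightarrow> 'a \<Rightarrow> bool" where
  "basis_forced V E v \<longleftrightarrow> v \<in> V \<and> (\<forall>R. metric_basis V E R \<longrightarrow> v \<in> R)"

end

theory Submission
  imports Defs
begin

lemma walk_single: "x \<in> V \<Longrightarrow> walk_betw V E x [x] x"
  by (simp add: walk_betw_def is_walk_def)

lemma walk_snoc:
  assumes "walk_betw V E x p y" "E y z" "z \<in> V"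
  shows "walk_betw V E x (p @ [z]) z"
proof -
  have p: "p \<noteq> []" "set p \<subseteq> V" "hd p = x" "last p = y"
    "\<And>i. Suc i < length p \<Longrightarrow> E (p ! i) (p ! Suc i)"
    using assms by (auto simp: walk_betw_def is_walk_def)
  have "E ((p @ [z]) ! i) ((p @ [z]) ! Suc i)" if "Suc i < length (p @ [z])" for i
  proof (cases "Suc i < length p")
    case True then show ?thesis using p(5) by (simp add: nth_append)
  next
    case False
    then have "Suc i = length p" using that by simp
    then have "p ! i = y" using p(1,4) by (metis diff_Suc_1 last_conv_nth)
    then show ?thesis using \<open>Suc i = length p\<close> assms(2) by (simp add: nth_append)
  qed
  then show ?thesis using p assms(3) by (auto simp: walk_betw_def is_walk_def)
qed

lemma walk_rev:
  assumes "simple_graph V E" "walk_betw V E x p y"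
  shows "walk_betw V E y (rev p) x"
proof -
  have p: "p \<noteq> []" "set p \<subseteq> V" "hd p = x" "last p = y"
    "\<And>i. Suc i < length p \<Longrightarrow> E (p ! i) (p ! Suc i)"
    using assms by (auto simp: walk_betw_def is_walk_def)
  have sym: "\<And>a b. E a b \<Longrightarrow> E b a" using assms(1) by (auto simp: simple_graph_def)
  have "E (rev p ! i) (rev p ! Suc i)" if "Suc i < length p" for i
  proof -
    define j where "j = length p - Suc (Suc i)"
    have "Suc j < length p" using that j_def by simp
    have e1: "rev p ! i = p ! Suc j" using that by (simp add: rev_nth j_def Suc_diff_Suc)
    have e2: "rev p ! Suc i = p ! j" using that by (simp add: rev_nth j_def)
    show ?thesis using p(5)[OF \<open>Suc j < length p\<close>] sym e1 e2 by simp
  qed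
  then show ?thesis using p by (auto simp: walk_betw_def is_walk_def hd_rev last_rev)
qed

lemma walk_take:
  assumes "walk_betw V E x p y" "k < length p"
  shows "walk_betw V E x (take (Suc k) p) (p ! k)"
proof -
  have p: "p \<noteq> []" "set p \<subseteq> V" "hd p = x" "last p = y"
    "\<And>i. Suc i < length p \<Longrightarrow> E (p ! i) (p ! Suc i)"
    using assms by (auto simp: walk_betw_def is_walk_def)
  have "set (take (Suc k) p) \<subseteq> V" using p(2) by (meson order_trans set_take_subset)
  moreover have "last (take (Suc k) p) = p ! k"
    using assms(2) by (subst last_conv_nth) (auto simp: min_def, subgoal_tac "length p - Suc 0 = k", auto)
  moreover have "hd (take (Suc k) p) = x" using p(1,3) by simp
  moreover have "take (Suc k) p \<noteq> []" using p(1) by simp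
  moreover have "\<forall>i. Suc i < length (take (Suc k) p) \<longrightarrow>
      E (take (Suc k) p ! i) (take (Suc k) p ! Suc i)" using p(5) by simp
  ultimately show ?thesis by (auto simp: walk_betw_def is_walk_def)
qed

locale cg =
  fixes V :: "'a set" and E :: "'a \<Rightarrow> 'a \<Rightarrow> bool"
  assumes sg: "simple_graph V E" and con: "connected_graph V E"
begin

lemma Ein: "E x y \<Longrightarrow> x \<in> V \<and> y \<in> V" using sg by (auto simp: simple_graph_def)
lemma Esym: "E x y \<Longrightarrow> E y x" using sg by (auto simp: simple_graph_def)
lemma Eirr: "\<not> E x x" using sg by (auto simp: simple_graph_def)

lemma dist_walk:
  assumes "x \<in> V" "y \<in> V"
  shows "\<exists>p. walk_betw V E x p y \<and> length p = Suc (dist V E x y)"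
proof -
  obtain p where p: "walk_betw V E x p y" using con assms by (auto simp: connected_graph_def)
  then have "p \<noteq> []" by (auto simp: walk_betw_def is_walk_def)
  then have "\<exists>n p. walk_betw V E x p y \<and> length p = Suc n" using p
    by (metis Suc_pred length_greater_0_conv)
  then show ?thesis unfolding dist_def by (rule LeastI_ex)
qed

lemma dist_le:
  assumes "walk_betw V E x p y" "length p = Suc n"
  shows "dist V E x y \<le> n"
  unfolding dist_def by (rule Least_le) (use assms in blast)

lemma dist_refl: "x \<in> V \<Longrightarrow> dist V E x x = 0"
  using dist_le[OF walk_single[of x V E]] by simp

lemma dist_0:
  assumes "x \<in> V" "y \<in> V" "dist V E x y = 0" shows "x = y"
proof -
  obtain p where "walk_betw V E x p y" "length p = 1" using dist_walk assms by fastforce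
  then show ?thesis by (cases p) (auto simp: walk_betw_def)
qed

lemma dist_sym:
  assumes "x \<in> V" "y \<in> V" shows "dist V E x y = dist V E y x"
proof -
  have "dist V E b a \<le> dist V E a b" if ab: "a \<in> V" "b \<in> V" for a b
  proof -
    obtain p where "walk_betw V E a p b" "length p = Suc (dist V E a b)"
      using dist_walk ab by blast
    then show ?thesis using walk_rev[OF sg] dist_le by (metis length_rev)
  qed
  then show ?thesis using assms by (meson antisym)
qed

lemma dist_step:
  assumes "x \<in> V" "y \<in> V" "E y z"
  shows "dist V E x z \<le> Suc (dist V E x y)"
proof -
  obtain p where "walk_betw V E x p y" "length p = Suc (dist V E x y)"
    using dist_walk assms by blast
  then show ?thesis using walk_snoc[of V E x p y z] assms Ein dist_le by fastforce
qed

lemma dist_step2: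
  assumes "x \<in> V" "E y z"
  shows "dist V E x z \<le> Suc (dist V E x y) \<and> dist V E x y \<le> Suc (dist V E x z)"
  using dist_step assms Ein Esym by blast

lemma dist_pred:
  assumes "x \<in> V" "z \<in> V" "dist V E x z = Suc k"
  shows "\<exists>y. E y z \<and> dist V E x y = k"
proof -
  obtain p where p: "walk_betw V E x p z" "length p = Suc (Suc k)"
    using dist_walk assms by fastforce
  have w: "walk_betw V E x (take (Suc k) p) (p ! k)" using walk_take p by fastforce
  have "dist V E x (p ! k) \<le> k" using dist_le[OF w] p by simp
  moreover have "E (p ! k) (p ! Suc k)" using p by (auto simp: walk_betw_def is_walk_def)
  moreover have "p \<noteq> []" using p(2) by auto
  then have "p ! Suc k = z" using p by (auto simp: walk_betw_def last_conv_nth)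
  ultimately show ?thesis using dist_step2[OF assms(1), of "p ! k" z] assms(3)
    by (intro exI[of _ "p ! k"]) auto
qed

lemma dist_adj: "E x y \<Longrightarrow> dist V E x y = 1"
  using dist_step[of x x y] dist_refl Ein Eirr dist_0
  by (metis One_nat_def le_SucE le_zero_eq)

lemma dist1: "x \<in> V \<Longrightarrow> y \<in> V \<Longrightarrow> dist V E x y = 1 \<Longrightarrow> E x y"
  using dist_pred[of x y 0] dist_0 Ein by (metis One_nat_def)

lemma pend_nb:
  assumes "pendant V E u" "E u v" "E u y" shows "y = v"
proof -
  have "card (neighbours V E u) = 1" using assms(1) by (simp add: pendant_def degree_def)
  then obtain a where "neighbours V E u = {a}" using card_1_singletonE by blast
  moreover have "v \<in> neighbours V E u" "y \<in> neighbours V E u"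
    using assms Ein by (auto simp: neighbours_def)
  ultimately show ?thesis by auto
qed

lemma pend_dist:
  assumes "pendant V E u" "E u v" "x \<in> V" "x \<noteq> u"
  shows "dist V E u x = Suc (dist V E v x)"
proof -
  have uV: "u \<in> V" "v \<in> V" using assms Ein by auto
  obtain k where k: "dist V E x u = Suc k"
    using dist_0[OF assms(3) uV(1)] assms(4) by (metis not0_implies_Suc)
  obtain y where y: "E y u" "dist V E x y = k" using dist_pred[OF assms(3) uV(1) k] by blast
  have "y = v" using pend_nb[OF assms(1,2)] Esym y(1) by blast
  then show ?thesis using k y dist_sym uV assms(3) by metis
qed

lemma w_dist:
  assumes "pendant V E u" "E u v" "neighbours V E v = {u, w}"
    "r \<in> V" "r \<noteq> u" "r \<noteq> v"
  shows "dist V E r u = Suc (Suc (dist V E r w))"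
proof -
  have uV: "u \<in> V" "v \<in> V" using assms Ein by auto
  obtain k where k: "dist V E r v = Suc k"
    using dist_0[OF assms(4) uV(2)] assms(6) by (metis not0_implies_Suc)
  obtain y where y: "E y v" "dist V E r y = k" using dist_pred[OF assms(4) uV(2) k] by blast
  have "y \<in> neighbours V E v" using y Esym Ein by (auto simp: neighbours_def)
  then have "y = u \<or> y = w" using assms(3) by auto
  moreover have "dist V E r u = Suc (Suc k)"
    using pend_dist[OF assms(1,2,4,5)] k dist_sym uV assms(4) by metis
  ultimately show ?thesis using y by auto
qed

lemma single_path:
  assumes "u \<in> V" "\<forall>x\<in>V. \<forall>y\<in>V. x \<noteq> y \<longrightarrow> dist V E u x \<noteq> dist V E u y"
  shows "is_path_graph V E"
proof -
  define D where "D = dist V E u"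
  define n where "n = card V"
  have fin: "finite V" using sg by (simp add: simple_graph_def)
  have inj: "inj_on D V" using assms(2) unfolding D_def inj_on_def by blast
  have down: "\<forall>x\<in>V. D x = m \<longrightarrow> (\<forall>j\<le>m. j \<in> D ` V)" for m
  proof (induction m)
    case 0 then show ?case by auto
  next
    case (Suc m)
    show ?case
    proof (intro ballI impI allI)
      fix x j assume x: "x \<in> V" "D x = Suc m" "j \<le> Suc m"
      show "j \<in> D ` V"
      proof (cases "j = Suc m")
        case True then show ?thesis using x by (metis image_eqI)
      next
        case False
        obtain y where "E y x" "D y = m" using dist_pred[OF assms(1) x(1)] x(2) D_def by blast
        moreover have "j \<le> m" using False x(3) by simp
        ultimately show ?thesis using Suc.IH Ein by blast
      qed
    qed
  qed
  have img: "D ` V = {0..<n}"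
  proof -
    have cardi: "card (D ` V) = n" using card_image[OF inj] n_def by simp
    have sub: "D ` V \<subseteq> {0..<n}"
    proof
      fix m assume m: "m \<in> D ` V"
      show "m \<in> {0..<n}"
      proof (rule ccontr)
        assume "m \<notin> {0..<n}"
        then have "n \<le> m" by simp
        obtain x where "x \<in> V" "D x = m" using m by blast
        then have "{0..m} \<subseteq> D ` V" using down[of m] by auto
        then have "card {0..m} \<le> card (D ` V)" using fin by (meson card_mono finite_imageI)
        then show False using cardi \<open>n \<le> m\<close> by simp
      qed
    qed
    show ?thesis using card_subset_eq[OF _ sub] cardi by simp
  qed
  have bD: "bij_betw D V {0..<n}" using inj img by (simp add: bij_betw_def)
  define f where "f = inv_into V D"
  have bf: "bij_betw f {0..<n} V" using bij_betw_inv_into[OF bD] f_def by simp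
  have fV: "i < n \<Longrightarrow> f i \<in> V" for i using bf by (auto simp: bij_betw_def)
  have Df: "i < n \<Longrightarrow> D (f i) = i" for i using img f_def by (simp add: f_inv_into_f)
  have n1: "n \<ge> 1" proof -
    have "V \<noteq> {}" using assms(1) by blast
    then show ?thesis using fin n_def by (simp add: Suc_le_eq card_gt_0_iff)
  qed
  have adj: "E (f i) (f j) \<longleftrightarrow> (i = Suc j \<or> j = Suc i)" if ij: "i < n" "j < n" for i j
  proof
    assume e: "E (f i) (f j)"
    have "f i \<noteq> f j" using e Eirr by metis
    then have "i \<noteq> j" by auto
    moreover have "D (f j) \<le> Suc (D (f i)) \<and> D (f i) \<le> Suc (D (f j))"
      using dist_step2[OF assms(1) e] D_def by simp
    ultimately show "i = Suc j \<or> j = Suc i" using Df ij by auto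
  next
    have gen: "E (f a) (f b)" if ab: "a < n" "b < n" "a = Suc b" for a b
    proof -
      obtain y where y: "E y (f a)" "D y = b"
        using dist_pred[OF assms(1) fV[OF ab(1)]] Df[OF ab(1)] ab(3) D_def by blast
      have "y \<in> V" using y Ein by blast
      then have "y = f b" using y(2) f_def inv_into_f_f[OF inj] by metis
      then show ?thesis using y Esym by blast
    qed
    assume "i = Suc j \<or> j = Suc i"
    then show "E (f i) (f j)" using gen ij Esym by blast
  qed
  show ?thesis unfolding is_path_graph_def using n1 bf adj by blast
qed

end


lemma resolving_V: assumes "cg V E" shows "resolving_set V E V"
proof -
  interpret cg V E by fact
  have "\<exists>r\<in>V. dist V E r x \<noteq> dist V E r y" if "x \<in> V" "y \<in> V" "x \<noteq> y" for x y
    using dist_refl[of x] dist_0[of x y] that by (intro bexI[of _ x]) auto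
  then show ?thesis unfolding resolving_set_def by blast
qed

theorem theorem4:
  fixes V :: "'a set" and E :: "'a \<Rightarrow> 'a \<Rightarrow> bool" and u v :: 'a
  assumes "simple_graph V E"
    and "connected_graph V E"
    and "\<not> is_path_graph V E"
    and "pendant V E u"
    and "E u v"
    and "cut_vertex V E v"
    and "degree V E v = 2"
  shows "\<not> basis_forced V E u"
proof
  assume bf: "basis_forced V E u"
  interpret cg V E using assms(1,2) by (simp add: cg_def)
  have fin: "finite V" using assms(1) by (simp add: simple_graph_def)
  have uV: "u \<in> V" "v \<in> V" using assms(5) Ein by auto
  have "\<exists>k R. resolving_set V E R \<and> card R = k" using resolving_V[OF cg_axioms] by blast
  then have "\<exists>R. resolving_set V E R \<and> card R = metric_dim V E"
    unfolding metric_dim_def by (rule LeastI_ex)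
  then obtain R0 where R0: "resolving_set V E R0" "card R0 = metric_dim V E" by blast
  have uR0: "u \<in> R0" using bf R0 by (auto simp: basis_forced_def metric_basis_def)
  have R0V: "R0 \<subseteq> V" using R0 by (simp add: resolving_set_def)
  have finR0: "finite R0" using R0V fin finite_subset by blast
  have cn: "card (neighbours V E v) = 2" using assms(7) by (simp add: degree_def)
  have un: "u \<in> neighbours V E v" using assms(5) Esym uV by (auto simp: neighbours_def)
  obtain w where nw: "neighbours V E v = {u, w}" "w \<noteq> u"
  proof -
    obtain a b where ab: "neighbours V E v = {a, b}" "a \<noteq> b" using cn card_2_iff by metis
    show ?thesis
    proof (cases "u = a")
      case True then show ?thesis using ab that by blast
    next
      case False then have "u = b" using un ab by auto
      then show ?thesis using ab that by (metis insert_commute)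
    qed
  qed
  have pd: "\<And>x. x \<in> V \<Longrightarrow> x \<noteq> u \<Longrightarrow> dist V E u x = Suc (dist V E v x)"
    using pend_dist[OF assms(4,5)] by blast
  show False
  proof (cases "\<exists>r0\<in>R0. r0 \<noteq> u \<and> r0 \<noteq> v")
    case True
    then obtain r0 where r0: "r0 \<in> R0" "r0 \<noteq> u" "r0 \<noteq> v" by blast
    define R' where "R' = insert v (R0 - {u})"
    have r0R: "r0 \<in> R'" using r0 R'_def by auto
    have vR: "v \<in> R'" using R'_def by auto
    have sepu: "\<exists>r\<in>R'. dist V E r u \<noteq> dist V E r y" if y: "y \<in> V" "y \<noteq> u" for y
    proof (cases "dist V E v y = 1")
      case False
      then show ?thesis using vR dist_adj[OF Esym[OF assms(5)]] by metis
    next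
      case True
      then have "E v y" using dist1 uV y by blast
      then have "y = w" using nw y by (auto simp: neighbours_def)
      have "r0 \<in> V" using r0 R0V by blast
      then have "dist V E r0 u = Suc (Suc (dist V E r0 w))" using w_dist[OF assms(4,5) nw(1)] r0 by blast
      then show ?thesis using r0R \<open>y = w\<close> by (intro bexI[of _ r0]) auto
    qed
    have res: "resolving_set V E R'"
      unfolding resolving_set_def
    proof (intro conjI ballI impI)
      show "R' \<subseteq> V" using R0V uV R'_def by auto
    next
      fix x y assume xy: "x \<in> V" "y \<in> V" "x \<noteq> y"
      show "\<exists>r\<in>R'. dist V E r x \<noteq> dist V E r y"
      proof (cases "x = u \<or> y = u")
        case True
        then show ?thesis using sepu xy by metis
      next
        case False
        obtain r where r: "r \<in> R0" "dist V E r x \<noteq> dist V E r y"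
          using R0(1) xy unfolding resolving_set_def by blast
        show ?thesis
        proof (cases "r = u")
          case True
          then show ?thesis using r pd xy False vR by auto
        next
          case False
          then show ?thesis using r R'_def by auto
        qed
      qed
    qed
    have "card R' \<le> card R0"
    proof -
      have "card R' \<le> Suc (card (R0 - {u}))" unfolding R'_def
        by (simp add: finR0 card_insert_if)
      also have "\<dots> = card R0" using uR0 finR0
        by (metis card_Suc_Diff1)
      finally show ?thesis .
    qed
    moreover have "metric_dim V E \<le> card R'"
      unfolding metric_dim_def by (rule Least_le) (use res in blast)
    ultimately have "metric_basis V E R'" using res R0 by (simp add: metric_basis_def)
    moreover have "u \<notin> R'" using R'_def assms(5) Eirr by auto
    ultimately show False using bf by (auto simp: basis_forced_def)
  next
    case False
    then have sub: "R0 \<subseteq> {u, v}" by blast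
    have "\<forall>x\<in>V. \<forall>y\<in>V. x \<noteq> y \<longrightarrow> dist V E u x \<noteq> dist V E u y"
    proof (intro ballI impI)
      fix x y assume xy: "x \<in> V" "y \<in> V" "x \<noteq> y"
      obtain r where r: "r \<in> R0" "dist V E r x \<noteq> dist V E r y"
        using R0(1) xy unfolding resolving_set_def by blast
      show "dist V E u x \<noteq> dist V E u y"
      proof (cases "x = u \<or> y = u")
        case True
        then show ?thesis using dist_refl dist_0 uV xy by metis
      next
        case False
        then have "r = u \<or> r = v" using sub r by auto
        then show ?thesis using r pd xy False by auto
      qed
    qed
    then show False using single_path uV assms(3) by blast
  qed
qed

end
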